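(* Let $q=4$ and let $k\ge 1$ be an integer. Let $S_{2k}=x+x^{4}+x^{4^2}+\cdots+x^{4^{2k-1}}\in\mathbb{F}_2[x]$. Then the polynomial \[ g(x)=x+S_{2k}(x)^{q^{2k}}+S_{2k}(x)^{q^k+3} \] is a permutation polynomial of $\mathbb{F}_{q^{3k}}=\mathbb{F}_{4^{3k}}$, i.e. the map $x\mapsto g(x)$ is a bijection of $\mathbb{F}_{4^{3k}}$.
   Context: $\mathbb{F}_m$ denotes the finite field with $m$ elements. A polynomial $f\in\mathbb{F}_m[x]$ is a permutation polynomial (PP) of $\mathbb{F}_m$ if the induced map $\mathbb{F}_m\to\mathbb{F}_m$, $x\mapsto f(x)$, is a bijection. *)

theory Defs
  imports Main
begin

definition S :: "nat \<Rightarrow> 'a::comm_ring_1 \<Rightarrow> 'a" where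
  "S n x = (\<Sum>i<n. x ^ (4 ^ i))"

end

theory Submission
  imports Defs
begin

lemma char2_eq:
  fixes a b r :: "'a::comm_ring_1"
  assumes "(2::'a) = 0" "a - b = 2 * r"
  shows "a = b"
  using assms by simp

lemma char2_neg: "(2::'a::comm_ring_1) = 0 \<Longrightarrow> - a = (a::'a)"
  by (metis add_eq_0_iff mult_2 mult_zero_left)

lemma char2_add_self: "(2::'a::comm_ring_1) = 0 \<Longrightarrow> a + a = (0::'a)"
  by (metis mult_2 mult_zero_left)

lemma frob2:
  fixes a b :: "'a::comm_ring_1"
  assumes "(2::'a) = 0"
  shows "(a + b) ^ (2 ^ n) = a ^ (2 ^ n) + b ^ (2 ^ n)"
proof (induction n)
  case 0 then show ?case by simp
next
  case (Suc n)
  have "(a + b) ^ (2 ^ Suc n) = ((a + b) ^ (2 ^ n))^2"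
    by (simp add: power_mult[symmetric] mult.commute)
  also have "\<dots> = (a ^ (2 ^ n) + b ^ (2 ^ n))^2" using Suc by simp
  also have "\<dots> = (a ^ (2 ^ n))^2 + (b ^ (2 ^ n))^2 + 2 * (a ^ (2 ^ n) * b ^ (2 ^ n))"
    by (simp add: power2_eq_square algebra_simps)
  also have "\<dots> = a ^ (2 ^ Suc n) + b ^ (2 ^ Suc n)"
    using assms by (simp add: power_mult[symmetric] mult.commute)
  finally show ?case .
qed

lemma frob2_sum:
  fixes f :: "'b \<Rightarrow> 'a::comm_ring_1"
  assumes "(2::'a) = 0"
  shows "(sum f A) ^ (2 ^ n) = sum (\<lambda>i. f i ^ (2 ^ n)) A"
proof (induction A rule: infinite_finite_induct)
  case (infinite A) then show ?case by (simp add: zero_power)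
next
  case empty then show ?case by (simp add: zero_power)
next
  case (insert x F)
  then show ?case using frob2[OF assms] by simp
qed

lemma char2_from_card:
  assumes "card (UNIV :: 'a::{field,finite} set) = 2 ^ n" "n > 0"
  shows "(2::'a) = 0"
proof -
  have "(\<Sum>x\<in>UNIV. x + (1::'a)) = (\<Sum>x\<in>UNIV. x)"
    by (rule sum.reindex_bij_witness[of _ "\<lambda>x. x - 1" "\<lambda>x. x + 1"]) auto
  then have "of_nat (card (UNIV :: 'a set)) = (0::'a)"
    by (simp add: sum.distrib)
  then have "(2::'a) ^ n = 0" using assms(1) by simp
  then show ?thesis by simp
qed

lemma fermat_field:
  fixes x :: "'a::{field,finite}"
  shows "x ^ card (UNIV :: 'a set) = x"
proof (cases "x = 0")
  case True then show ?thesis by (simp add: finite_UNIV_card_ge_0)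
next
  case False
  let ?U = "UNIV - {0::'a}"
  have "(\<Prod>y\<in>?U. x * y) = (\<Prod>y\<in>?U. y)"
    by (rule prod.reindex_bij_witness[of _ "\<lambda>y. y / x" "\<lambda>y. x * y"]) (use False in auto)
  then have "x ^ card ?U * (\<Prod>y\<in>?U. y) = 1 * (\<Prod>y\<in>?U. y)"
    by (simp add: prod.distrib)
  moreover have "(\<Prod>y\<in>?U. y) \<noteq> 0" by simp
  ultimately have "x ^ card ?U = 1" by (metis mult_right_cancel)
  moreover have "card ?U + 1 = card (UNIV :: 'a set)"
    by (simp add: card_Diff_singleton finite_UNIV_card_ge_0 Suc_leI)
  ultimately show ?thesis by (metis power_Suc2 mult_1 Suc_eq_plus1)
qed

lemma sum_split_nat: "(\<Sum>i<k+(m::nat). f i) = (\<Sum>i<k. f i) + (\<Sum>i<m. f (k+i))"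
  by (induction m) (simp_all add: add.assoc)

lemma pow_swap: "((a::'a::comm_monoid_mult) ^ m) ^ n = (a ^ n) ^ m"
  by (simp add: power_mult[symmetric] mult.commute)

lemma S_frob4:
  fixes x :: "'a::comm_ring_1"
  assumes "(2::'a) = 0"
  shows "S m x ^ 4 = S m x + x ^ (4 ^ m) - x"
proof -
  have "S m x ^ 4 = S m x ^ (2^2)" by simp
  also have "\<dots> = (\<Sum>i<m. (x ^ (4 ^ i)) ^ (2^2))"
    unfolding S_def by (rule frob2_sum[OF assms])
  also have "\<dots> = (\<Sum>i<m. x ^ (4 ^ Suc i))"
    by (simp add: power_mult[symmetric] mult.commute)
  also have "\<dots> = S (Suc m) x - x"
    unfolding S_def by (simp only: sum.lessThan_Suc_shift) simp
  also have "\<dots> = S m x + x ^ (4 ^ m) - x"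
    unfolding S_def by simp
  finally show ?thesis .
qed

lemma P_inj:
  fixes y1 y2 :: "'a::field"
  assumes two: "(2::'a) = 0" and Qpos: "Q > 0"
    and cyc: "\<And>z::'a. ((z^Q)^Q)^Q = z"
    and eq: "y1*(y1^Q)^2*((y1^Q)^Q) = y2*(y2^Q)^2*((y2^Q)^Q)"
  shows "y1 = y2"
proof -
  define b1 where "b1 = y1^Q"
  define c1 where "c1 = b1^Q"
  define b2 where "b2 = y2^Q"
  define c2 where "c2 = b2^Q"
  have cy1: "c1^Q = y1" and cy2: "c2^Q = y2" using cyc b1_def c1_def b2_def c2_def by auto
  have E1: "y1*b1^2*c1 = y2*b2^2*c2" using eq b1_def c1_def b2_def c2_def by simp
  have E2: "b1*c1^2*y1 = b2*c2^2*y2"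
  proof -
    have "(y1*b1^2*c1)^Q = (y2*b2^2*c2)^Q" using E1 by simp
    then show ?thesis by (simp add: power_mult_distrib pow_swap[of _ 2] b1_def[symmetric] c1_def[symmetric]
        b2_def[symmetric] c2_def[symmetric] cy1 cy2)
  qed
  have E3: "c1*y1^2*b1 = c2*y2^2*b2"
  proof -
    have "(b1*c1^2*y1)^Q = (b2*c2^2*y2)^Q" using E2 by simp
    then show ?thesis by (simp add: power_mult_distrib pow_swap[of _ 2] b1_def[symmetric] c1_def[symmetric]
        b2_def[symmetric] c2_def[symmetric] cy1 cy2)
  qed
  show ?thesis
  proof (cases "y1 = 0")
    case True
    then have "y2*b2^2*c2 = 0" using E1 b1_def c1_def Qpos by simp
    then show ?thesis using True b2_def c2_def Qpos by auto
  next
    case False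
    have nb1: "b1 \<noteq> 0" "c1 \<noteq> 0" using False b1_def c1_def by auto
    then have "y2*b2^2*c2 \<noteq> 0" using E1 False by (metis mult_eq_0_iff power_not_zero)
    then have ny2: "y2 \<noteq> 0" "b2 \<noteq> 0" "c2 \<noteq> 0" by auto
    define l where "l = y2 / y1"
    have y2l: "y2 = l * y1" using False l_def by simp
    have "b1/y1 = b2/y2"
    proof -
      have "b1/y1 = (y1*b1^2*c1)/(c1*y1^2*b1)" using False nb1 by (simp add: field_simps power2_eq_square)
      also have "\<dots> = (y2*b2^2*c2)/(c2*y2^2*b2)" using E1 E3 by simp
      also have "\<dots> = b2/y2" using ny2 by (simp add: field_simps power2_eq_square)
      finally show ?thesis .
    qed
    then have "b2 = b1/y1 * y2" using ny2 by (simp add: field_simps)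
    then have b2l: "b2 = l * b1" using y2l False by simp
    have "c1/y1 = c2/y2"
    proof -
      have "c1/y1 = (b1*c1^2*y1)/(c1*y1^2*b1)" using False nb1 by (simp add: field_simps power2_eq_square)
      also have "\<dots> = (b2*c2^2*y2)/(c2*y2^2*b2)" using E2 E3 by simp
      also have "\<dots> = c2/y2" using ny2 by (simp add: field_simps power2_eq_square)
      finally show ?thesis .
    qed
    then have "c2 = c1/y1 * y2" using ny2 by (simp add: field_simps)
    then have c2l: "c2 = l * c1" using y2l False by simp
    have "y1*b1^2*c1 = l^4 * (y1*b1^2*c1)" using E1 y2l b2l c2l by (simp add: algebra_simps power2_eq_square power4_eq_xxxx)
    then have l4: "l^4 = 1" using False nb1 by simp
    have "(l + 1)^(2^2) = l^(2^2) + 1^(2^2)" by (rule frob2[OF two])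
    then have "(l + 1)^4 = 0" using l4 two by simp
    then have "l = - 1" by (simp add: eq_neg_iff_add_eq_0)
    then have "l = 1" using char2_neg[OF two, of 1] by simp
    then show ?thesis using y2l by simp
  qed
qed

lemma key_identity:
  fixes x y :: "'a::field"
  assumes two: "(2::'a) = 0"
    and cyc: "\<And>z::'a. ((z^Q)^Q)^Q = z"
    and addQ: "\<And>a b::'a. (a+b)^Q = a^Q + b^Q"
    and V: "y + y^Q + (y^Q)^Q = 0"
    and F4: "y^4 = y + (x^Q)^Q - x"
  shows "(x + (y^Q)^Q + y^Q*y^3) + (((x + (y^Q)^Q + y^Q*y^3))^Q)^Q = y*(y^Q)^2*((y^Q)^Q)"
proof -
  define b where "b = y^Q"
  define c where "c = b^Q"
  have cy: "c^Q = y" using cyc b_def c_def by simp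
  have "((x + c + b*y^3)^Q)^Q = (x^Q)^Q + b + y*c^3"
    by (simp add: addQ power_mult_distrib pow_swap[of _ 3] b_def[symmetric] c_def[symmetric] cy)
  moreover have cc: "c = -(y+b)" using V unfolding b_def c_def by (metis add.commute add.left_commute add_eq_0_iff)
  moreover have "(x^Q)^Q = y^4 - y + x" using F4 by simp
  ultimately have "(x + c + b*y^3) + ((x + c + b*y^3)^Q)^Q
     = x + c + b*y^3 + (y^4 - y + x) + b + y*c^3" by simp
  also have "\<dots> = y*b^2*c"
    by (rule char2_eq[OF two, where r = "x - y - y^3*b - y^2*b^2"]) (simp add: cc; algebra)
  finally show ?thesis by (simp add: b_def c_def)
qed

theorem theorem1p1:
  fixes k :: nat
    and g :: "'a::{field,finite} \<Rightarrow> 'a"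
  assumes "k \<ge> 1"
    and "card (UNIV :: 'a set) = 4 ^ (3 * k)"
    and "g = (\<lambda>x. x + (S (2 * k) x) ^ (4 ^ (2 * k)) + (S (2 * k) x) ^ (4 ^ k + 3))"
  shows "bij g"
proof -
  define Q :: nat where "Q = 4 ^ k"
  have Q2: "Q = 2 ^ (2*k)" unfolding Q_def by (simp add: power_mult)
  have h24: "(2::nat)^(k*2) = 4^k" by (metis Q2 Q_def mult.commute)
  have Qpos: "Q > 0" unfolding Q_def by simp
  have QQ: "4 ^ (2*k) = Q * Q" unfolding Q_def by (simp add: power_mult[symmetric] mult_2 power_add)
  have card: "card (UNIV :: 'a set) = Q*Q*Q"
    using assms(2) unfolding Q_def by (simp add: power_mult[symmetric] power_add numeral_3_eq_3 algebra_simps)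
  have "(4::nat)^(3*k) = (2^2)^(3*k)" by simp
  also have "\<dots> = 2^(2*(3*k))" by (rule power_mult[symmetric])
  finally have "card (UNIV :: 'a set) = 2 ^ (6*k)" using assms(2) by simp
  then have two: "(2::'a) = 0" using char2_from_card assms(1) by fastforce
  have cyc: "((z^Q)^Q)^Q = z" for z :: 'a
    using fermat_field[of z] card by (simp add: power_mult[symmetric])
  have addQ: "(a+b)^Q = a^Q + b^Q" for a b :: 'a
    unfolding Q2 by (rule frob2[OF two])
  define P where "P = (\<lambda>y::'a. y*(y^Q)^2*((y^Q)^Q))"
  have main: "g x + ((g x)^Q)^Q = P (S (2*k) x)" for x
  proof -
    define y where "y = S (2*k) x"
    define A where "A = S k x"
    have "y = A + (\<Sum>i<k. x ^ (4 ^ (k+i)))"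
      unfolding y_def A_def S_def mult_2 by (rule sum_split_nat)
    moreover have "A ^ Q = (\<Sum>i<k. x ^ (4 ^ (k+i)))"
      unfolding A_def S_def Q2 frob2_sum[OF two]
      by (simp add: power_mult[symmetric] power_add mult.commute h24 flip: power_mult power_mult_distrib)
    ultimately have yA: "y = A + A^Q" by simp
    have V: "y + y^Q + (y^Q)^Q = 0"
    proof -
      have "y + y^Q + (y^Q)^Q = 2 * (A + A^Q + (A^Q)^Q)"
        unfolding yA addQ cyc by (simp add: algebra_simps cyc[of A])
      then show ?thesis using two by simp
    qed
    have F4: "y^4 = y + (x^Q)^Q - x"
      unfolding y_def using S_frob4[OF two, of "2*k" x] QQ by (simp add: power_mult)
    have gx: "g x = x + (y^Q)^Q + y^Q*y^3"
      using assms(3) QQ unfolding y_def Q_def by (simp add: power_mult power_add)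
    show ?thesis unfolding gx P_def y_def[symmetric]
      by (rule key_identity[OF two cyc addQ V F4])
  qed
  have "inj g"
  proof (rule injI)
    fix x1 x2 assume e: "g x1 = g x2"
    then have "P (S (2*k) x1) = P (S (2*k) x2)" using main[of x1] main[of x2] by simp
    then have ye: "S (2*k) x1 = S (2*k) x2"
      unfolding P_def by (rule P_inj[OF two Qpos cyc])
    show "x1 = x2" using e ye assms(3) by simp
  qed
  then show ?thesis using finite_UNIV_inj_surj[of g] by (simp add: bij_def)
qed

end
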